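(* If $m\ge 10$ is even and $m=3t+1$ for some positive integer $t$, then $\lambda(L_m)<\lambda(T_m)$.
   Context: $\lambda(\cdot)$ denotes the largest adjacency eigenvalue. For even $m$, $L_m$ is obtained from a 5-cycle $u_1u_2u_3u_4u_5$ by adding $\frac{m-6}{2}$ new vertices each adjacent exactly to $u_1$ and $u_3$, and one new vertex adjacent only to $u_1$ (equivalently, $K_{2,\frac{m-2}{2}}$ with one edge subdivided, with a pendant edge attached at a vertex of maximum degree). When $\frac{m-4}{3}$ is a positive integer, $T_m$ is obtained from $C_5$ by replacing two adjacent vertices by independent sets of sizes $\frac{m-4}{3}$ and $2$ (each new vertex adjacent to all vertices/sets that the replaced vertex was adjacent to, so the two sets span a complete bipartite graph). *)

theory Defs
  imports Complex_Main "Jordan_Normal_Form.Char_Poly"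
begin

definition adj_matrix :: "nat \<Rightarrow> (nat \<times> nat) set \<Rightarrow> real mat" where
  "adj_matrix n E = mat n n (\<lambda>(i, j). if (i, j) \<in> E \<or> (j, i) \<in> E then 1 else 0)"

text \<open>Largest adjacency eigenvalue (adjacency matrices are real symmetric,
  so all eigenvalues are real).\<close>

definition lambda_max :: "real mat \<Rightarrow> real" where
  "lambda_max A = Max {x. eigenvalue A x}"

text \<open>The 5-cycle u1 u2 u3 u4 u5 on vertices 0,1,2,3,4.\<close>

definition C5_edges :: "(nat \<times> nat) set" where
  "C5_edges = {(0,1),(1,2),(2,3),(3,4),(4,0)}"

text \<open>L_m (m even): C5 plus (m-6)/2 vertices 5..4+k each adjacent to u1 = 0 and
  u3 = 2, plus a pendant vertex 5+k adjacent to u1 = 0.\<close>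

definition L_nverts :: "nat \<Rightarrow> nat" where
  "L_nverts m = 6 + (m - 6) div 2"

definition L_edges :: "nat \<Rightarrow> (nat \<times> nat) set" where
  "L_edges m = (let k = (m - 6) div 2 in
     C5_edges \<union> {(0, i) | i. 5 \<le> i \<and> i < 5 + k} \<union> {(2, i) | i. 5 \<le> i \<and> i < 5 + k}
       \<union> {(0, 5 + k)})"

definition L_graph_adj :: "nat \<Rightarrow> real mat" where
  "L_graph_adj m = adj_matrix (L_nverts m) (L_edges m)"

text \<open>T_m ((m-4)/3 a positive integer): C5 = v1 v2 v3 v4 v5 with v1 replaced by the
  independent set A = {0..<s}, s = (m-4)/3, and v2 replaced by the independent set
  B = {s, s+1}; v3 = s+2, v4 = s+3, v5 = s+4.\<close>

definition T_nverts :: "nat \<Rightarrow> nat" where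
  "T_nverts m = (m - 4) div 3 + 5"

definition T_edges :: "nat \<Rightarrow> (nat \<times> nat) set" where
  "T_edges m = (let s = (m - 4) div 3 in
     {(a, b) | a b. a < s \<and> (b = s \<or> b = s + 1)}
     \<union> {(a, s + 4) | a. a < s}
     \<union> {(b, s + 2) | b. b = s \<or> b = s + 1}
     \<union> {(s + 2, s + 3), (s + 3, s + 4)})"

definition T_graph_adj :: "nat \<Rightarrow> real mat" where
  "T_graph_adj m = adj_matrix (T_nverts m) (T_edges m)"

end

theory Submission
  imports Defs
begin

lemma adj_dim[simp]: "adj_matrix n E \<in> carrier_mat n n" "dim_row (adj_matrix n E) = n"
  by (auto simp: adj_matrix_def)

lemma adj_row:
  assumes "i < n" "w \<in> carrier_vec n"
  shows "(adj_matrix n E *\<^sub>v w) $ i = (\<Sum>j\<in>{j. j < n \<and> ((i,j)\<in>E \<or> (j,i)\<in>E)}. w $ j)"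
proof -
  have "(adj_matrix n E *\<^sub>v w) $ i = (\<Sum>j\<in>{0..<n}. (if (i,j)\<in>E \<or> (j,i)\<in>E then w $ j else 0))"
    using assms by (auto simp: adj_matrix_def scalar_prod_def row_def intro!: sum.cong)
  also have "\<dots> = (\<Sum>j\<in>{j\<in>{0..<n}. (i,j)\<in>E \<or> (j,i)\<in>E}. w $ j)"
    by (subst sum.inter_filter) auto
  also have "{j\<in>{0..<n}. (i,j)\<in>E \<or> (j,i)\<in>E} = {j. j < n \<and> ((i,j)\<in>E \<or> (j,i)\<in>E)}" by auto
  finally show ?thesis .
qed

lemma eig_finite:
  assumes A: "(A::real mat) \<in> carrier_mat n n"
  shows "finite {x. eigenvalue A x}"
proof -
  have "char_poly A \<noteq> 0" using degree_monic_char_poly[OF A] by auto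
  then have "finite {x. poly (char_poly A) x = 0}" by (rule poly_roots_finite)
  then show ?thesis using eigenvalue_root_char_poly[OF A] by simp
qed


lemma L_rows:
  fixes k :: nat
  defines "E \<equiv> C5_edges \<union> {(0, i) | i. 5 \<le> i \<and> i < 5 + k} \<union> {(2, i) | i. 5 \<le> i \<and> i < 5 + k} \<union> {(0, 5 + k)}"
  defines "N \<equiv> \<lambda>i. {j. j < k + 6 \<and> ((i,j)\<in>E \<or> (j,i)\<in>E)}"
  shows "N 0 = insert 1 (insert 4 (insert (k+5) {5..<k+5}))"
    "N 1 = {0,2}" "N 2 = insert 1 (insert 3 {5..<k+5})" "N 3 = {2,4}" "N 4 = {0,3}"
    "N (k+5) = {0}" "5 \<le> i \<Longrightarrow> i < k+5 \<Longrightarrow> N i = {0,2}"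
  unfolding N_def E_def C5_edges_def by auto


lemma T_rows:
  fixes s :: nat
  defines "E \<equiv> {(a, b) | a b. a < s \<and> (b = s \<or> b = s + 1)}
     \<union> {(a, s + 4) | a. a < s}
     \<union> {(b, s + 2) | b. b = s \<or> b = s + 1}
     \<union> {(s + 2, s + 3), (s + 3, s + 4)}"
  defines "N \<equiv> \<lambda>i. {j. j < s + 5 \<and> ((i,j)\<in>E \<or> (j,i)\<in>E)}"
  shows "i < s \<Longrightarrow> N i = {s, s+1, s+4}"
    "N s = insert (s+2) {..<s}" "N (s+1) = insert (s+2) {..<s}"
    "N (s+2) = {s, s+1, s+3}" "N (s+3) = {s+2, s+4}" "N (s+4) = insert (s+3) {..<s}"
  unfolding N_def E_def by auto

definition LP :: "real \<Rightarrow> real \<Rightarrow> real" where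
  "LP K x = x^7 - (2*K+6)*x^5 + (5*K+8)*x^3 - (2*K+2)*x^2 - (K+1)*x"

lemma L_id_v0:
  fixes x a b c d e p S K :: real
  shows "LP K x*a = (x^6 - x^4*K - 3*x^4 + x^2*K + x^2)*(x*a - (b+e+S+p)) + (x^5 - 2*x^3 + x^2)*(x*b - (a+c)) + (x^4*K + x^4 + x^3 - x^2*K - x^2)*(x*c - (b+d+S)) + (x^4 + x^3*K + x^3 - x^2*K - x^2)*(x*d-(c+e)) + (x^5 - x^3*K - 2*x^3 + x^2*K + x^2)*(x*e-(d+a)) + (x^5 - x^3*K - 3*x^3 + x*K + x)*(x*p-a) + (x^5 - 2*x^3 + x^2)*(x*S-K*(a+c))"
  unfolding LP_def by (simp add: algebra_simps power_numeral_reduce)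

lemma L_id_v1:
  fixes x a b c d e p S K :: real
  shows "LP K x*b = (x^5 - 2*x^3 + x^2)*(x*a - (b+e+S+p)) + (x^6 - 2*x^4*K - 4*x^4 + 5*x^2*K + 3*x^2 - 2*x*K - K)*(x*b - (a+c)) + (x^5 - 3*x^3 + x^2 + x)*(x*c - (b+d+S)) + (x^4 + x^3 - 2*x^2)*(x*d-(c+e)) + (x^4 + x^3 - x^2 - x)*(x*e-(d+a)) + (x^4 - 2*x^2 + x)*(x*p-a) + (2*x^4 - 5*x^2 + 2*x + 1)*(x*S-K*(a+c))"
  unfolding LP_def by (simp add: algebra_simps power_numeral_reduce)

lemma L_id_v2:
  fixes x a b c d e p S K :: real
  shows "LP K x*c = (x^4*K + x^4 + x^3 - x^2*K - x^2)*(x*a - (b+e+S+p)) + (x^5 - 3*x^3 + x^2 + x)*(x*b - (a+c)) + (x^6 - x^4*K - 4*x^4 + x^2*K + 2*x^2)*(x*c - (b+d+S)) + (x^5 - x^3*K - 3*x^3 + x^2*K + x^2)*(x*d-(c+e)) + (x^4 + x^3*K + x^3 - x^2*K - 2*x^2)*(x*e-(d+a)) + (x^3*K + x^3 + x^2 - x*K - x)*(x*p-a) + (x^5 - 3*x^3 + x^2 + x)*(x*S-K*(a+c))"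
  unfolding LP_def by (simp add: algebra_simps power_numeral_reduce)

lemma L_id_v3:
  fixes x a b c d e p S K :: real
  shows "LP K x*d = (x^4 + x^3*K + x^3 - x^2*K - x^2)*(x*a - (b+e+S+p)) + (x^4 + x^3 - 2*x^2)*(x*b - (a+c)) + (x^5 - x^3*K - 3*x^3 + x^2*K + x^2)*(x*c - (b+d+S)) + (x^6 - 2*x^4*K - 4*x^4 + 2*x^2*K + 2*x^2)*(x*d-(c+e)) + (x^5 - 2*x^3*K - 3*x^3 + x^2*K + x^2 + x*K + x)*(x*e-(d+a)) + (x^3 + x^2*K + x^2 - x*K - x)*(x*p-a) + (x^4 + x^3 - 2*x^2)*(x*S-K*(a+c))"
  unfolding LP_def by (simp add: algebra_simps power_numeral_reduce)

lemma L_id_v4: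
  fixes x a b c d e p S K :: real
  shows "LP K x*e = (x^5 - x^3*K - 2*x^3 + x^2*K + x^2)*(x*a - (b+e+S+p)) + (x^4 + x^3 - x^2 - x)*(x*b - (a+c)) + (x^4 + x^3*K + x^3 - x^2*K - 2*x^2)*(x*c - (b+d+S)) + (x^5 - 2*x^3*K - 3*x^3 + x^2*K + x^2 + x*K + x)*(x*d-(c+e)) + (x^6 - 2*x^4*K - 4*x^4 + 2*x^2*K + 3*x^2)*(x*e-(d+a)) + (x^4 - x^2*K - 2*x^2 + x*K + x)*(x*p-a) + (x^4 + x^3 - x^2 - x)*(x*S-K*(a+c))"
  unfolding LP_def by (simp add: algebra_simps power_numeral_reduce)

lemma L_id_p:
  fixes x a b c d e p S K :: real
  shows "LP K x*p = (x^5 - x^3*K - 3*x^3 + x*K + x)*(x*a - (b+e+S+p)) + (x^4 - 2*x^2 + x)*(x*b - (a+c)) + (x^3*K + x^3 + x^2 - x*K - x)*(x*c - (b+d+S)) + (x^3 + x^2*K + x^2 - x*K - x)*(x*d-(c+e)) + (x^4 - x^2*K - 2*x^2 + x*K + x)*(x*e-(d+a)) + (x^6 - 2*x^4*K - 5*x^4 + 4*x^2*K + 5*x^2 - 2*x*K - 2*x)*(x*p-a) + (x^4 - 2*x^2 + x)*(x*S-K*(a+c))"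
  unfolding LP_def by (simp add: algebra_simps power_numeral_reduce)

lemma L_id_S:
  fixes x a b c d e p S K :: real
  shows "LP K x*S = (x^5*K - 2*x^3*K + x^2*K)*(x*a - (b+e+S+p)) + (2*x^4*K - 5*x^2*K + 2*x*K + K)*(x*b - (a+c)) + (x^5*K - 3*x^3*K + x^2*K + x*K)*(x*c - (b+d+S)) + (x^4*K + x^3*K - 2*x^2*K)*(x*d-(c+e)) + (x^4*K + x^3*K - x^2*K - x*K)*(x*e-(d+a)) + (x^4*K - 2*x^2*K + x*K)*(x*p-a) + (x^6 - 6*x^4 + 8*x^2 - 2*x - 1)*(x*S-K*(a+c))"
  unfolding LP_def by (simp add: algebra_simps power_numeral_reduce)


lemma L_elim:
  fixes x a b c d e p S K :: real
  assumes "x*a = b+e+S+p" "x*b = a+c" "x*c = b+d+S" "x*d = c+e"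
   "x*e = d+a" "x*p = a" "x*S = K*(a+c)"
  shows "LP K x*a = 0 \<and> LP K x*b = 0 \<and> LP K x*c = 0 \<and> LP K x*d = 0 \<and> LP K x*e = 0 \<and> LP K x*p = 0 \<and> LP K x*S = 0"
proof -
  have "LP K x*a = 0" using L_id_v0[where x=x and a=a and b=b and c=c and d=d and e=e and p=p and S=S and K=K] assms by simp
  have "LP K x*b = 0" using L_id_v1[where x=x and a=a and b=b and c=c and d=d and e=e and p=p and S=S and K=K] assms by simp
  have "LP K x*c = 0" using L_id_v2[where x=x and a=a and b=b and c=c and d=d and e=e and p=p and S=S and K=K] assms by simp
  have "LP K x*d = 0" using L_id_v3[where x=x and a=a and b=b and c=c and d=d and e=e and p=p and S=S and K=K] assms by simp
  have "LP K x*e = 0" using L_id_v4[where x=x and a=a and b=b and c=c and d=d and e=e and p=p and S=S and K=K] assms by simp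
  have "LP K x*p = 0" using L_id_p[where x=x and a=a and b=b and c=c and d=d and e=e and p=p and S=S and K=K] assms by simp
  have "LP K x*S = 0" using L_id_S[where x=x and a=a and b=b and c=c and d=d and e=e and p=p and S=S and K=K] assms by simp
  show ?thesis using \<open>LP K x*a = 0\<close> \<open>LP K x*b = 0\<close> \<open>LP K x*c = 0\<close> \<open>LP K x*d = 0\<close> \<open>LP K x*e = 0\<close> \<open>LP K x*p = 0\<close> \<open>LP K x*S = 0\<close> by blast
qed

lemma L_eig:
  fixes k :: nat and x :: real
  defines "E \<equiv> C5_edges \<union> {(0, i) | i. 5 \<le> i \<and> i < 5 + k} \<union> {(2, i) | i. 5 \<le> i \<and> i < 5 + k} \<union> {(0, 5 + k)}"
  assumes ev: "eigenvalue (adj_matrix (k+6) E) x" and x0: "x \<noteq> 0"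
  shows "LP (real k) x = 0"
proof (rule ccontr)
  assume nz: "LP (real k) x \<noteq> 0"
  from ev obtain v where v: "v \<in> carrier_vec (k+6)" "v \<noteq> 0\<^sub>v (k+6)" "adj_matrix (k+6) E *\<^sub>v v = x \<cdot>\<^sub>v v"
    unfolding eigenvalue_def eigenvector_def by auto
  have row: "(\<Sum>j\<in>{j. j < k+6 \<and> ((i,j)\<in>E \<or> (j,i)\<in>E)}. v$j) = x * v$i" if "i < k+6" for i
  proof -
    have "(adj_matrix (k+6) E *\<^sub>v v) $ i = (x \<cdot>\<^sub>v v) $ i" using v(3) by simp
    then show ?thesis using adj_row[OF that v(1)] that v(1) by simp
  qed
  note R = L_rows[where k=k, folded E_def]
  define S where "S = (\<Sum>j\<in>{5..<k+5}. v$j)"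
  have e0: "x * v$0 = v$1 + v$4 + S + v$(k+5)" using row[of 0] R(1) by (simp add: S_def algebra_simps)
  have e1: "x * v$1 = v$0 + v$2" using row[of 1] R(2) by simp
  have e2: "x * v$2 = v$1 + v$3 + S" using row[of 2] R(3) by (simp add: S_def algebra_simps)
  have e3: "x * v$3 = v$2 + v$4" using row[of 3] R(4) by simp
  have e4: "x * v$4 = v$3 + v$0" using row[of 4] R(5) by (simp add: algebra_simps)
  have ep: "x * v$(k+5) = v$0" using row[of "k+5"] R(6) by simp
  have et: "x * v$i = v$0 + v$2" if "5 \<le> i" "i < k+5" for i using row[of i] R(7)[OF that] that by simp
  have eS: "x * S = real k * (v$0 + v$2)"
  proof -
    have "x * S = (\<Sum>j\<in>{5..<k+5}. x * v$j)" by (simp add: S_def sum_distrib_left)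
    also have "\<dots> = (\<Sum>j\<in>{5..<k+5}. v$0 + v$2)" by (rule sum.cong) (auto simp: et)
    finally show ?thesis by simp
  qed
  from L_elim[OF e0 e1 e2 e3 e4 ep eS] nz
  have z: "v$0 = 0" "v$1 = 0" "v$2 = 0" "v$3 = 0" "v$4 = 0" "v$(k+5) = 0" by auto
  have "v = 0\<^sub>v (k+6)"
  proof (rule eq_vecI)
    show "dim_vec v = dim_vec (0\<^sub>v (k+6))" using v(1) by simp
    fix i assume "i < dim_vec (0\<^sub>v (k+6))"
    then have i: "i < k+6" by simp
    consider "i = 0" | "i = 1" | "i = 2" | "i = 3" | "i = 4" | "i = k+5" | "5 \<le> i \<and> i < k+5" using i by linarith
    then show "v $ i = 0\<^sub>v (k+6) $ i"
    proof cases
      case 7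
      then have "x * v$i = 0" using et z by simp
      then show ?thesis using x0 i by simp
    qed (use z i in auto)
  qed
  with v(2) show False by simp
qed

lemma T_eig:
  fixes s :: nat and r :: real
  defines "E \<equiv> {(a, b) | a b. a < s \<and> (b = s \<or> b = s + 1)}
     \<union> {(a, s + 4) | a. a < s}
     \<union> {(b, s + 2) | b. b = s \<or> b = s + 1}
     \<union> {(s + 2, s + 3), (s + 3, s + 4)}"
  assumes r1: "r > 1" and g: "r^5 - (3*s+4)*r^3 + (7*s+2)*r - 4*s = 0"
  shows "eigenvalue (adj_matrix (s+5) E) r"
proof -
  define a where "a = r^2 + 2*r - 2"
  define b where "b = r^2 + r*s - s"
  define c where "c = r*b - s*a"
  define d where "d = r*c - 2*b"
  define e where "e = r*a - 2*b"
  define F where "F = (\<lambda>j. if j < s then a else if j < s+2 then b else if j = s+2 then c else if j = s+3 then d else e)"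
  define w where "w = vec (s+5) F"
  have w: "w \<in> carrier_vec (s+5)" by (simp add: w_def)
  have "r*r > 1*1" using r1 by (intro mult_strict_mono) auto
  then have a0: "a > 0" using r1 unfolding a_def by (simp add: power2_eq_square)
  have eq4: "c + e = r * d"
  proof -
    have "r*d - (c+e) = r^5 - (3*s+4)*r^3 + (7*s+2)*r - 4*s"
      unfolding a_def b_def c_def d_def e_def by (simp add: algebra_simps power_numeral_reduce)
    then show ?thesis using g by simp
  qed
  have eq5: "d + s*a = r * e"
    unfolding a_def b_def c_def d_def e_def by (simp add: algebra_simps power_numeral_reduce)
  note R = T_rows[where s=s, folded E_def]
  have sA: "(\<Sum>j\<in>{..<s}. w$j) = s * a"
  proof -
    have "(\<Sum>j\<in>{..<s}. w$j) = (\<Sum>j\<in>{..<s}. a)" by (rule sum.cong) (auto simp: w_def F_def)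
    then show ?thesis by simp
  qed
  have "adj_matrix (s+5) E *\<^sub>v w = r \<cdot>\<^sub>v w"
  proof (rule eq_vecI)
    show "dim_vec (adj_matrix (s+5) E *\<^sub>v w) = dim_vec (r \<cdot>\<^sub>v w)" by (simp add: w_def)
    fix i assume "i < dim_vec (r \<cdot>\<^sub>v w)"
    then have i: "i < s+5" by (simp add: w_def)
    have lhs: "(adj_matrix (s+5) E *\<^sub>v w) $ i = (\<Sum>j\<in>{j. j < s+5 \<and> ((i,j)\<in>E \<or> (j,i)\<in>E)}. w $ j)"
      by (rule adj_row[OF i w])
    have rhs: "(r \<cdot>\<^sub>v w) $ i = r * F i" using i by (simp add: w_def)
    consider "i < s" | "i = s" | "i = s+1" | "i = s+2" | "i = s+3" | "i = s+4" using i by linarith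
    then show "(adj_matrix (s+5) E *\<^sub>v w) $ i = (r \<cdot>\<^sub>v w) $ i"
    proof cases
      case 1
      then show ?thesis unfolding lhs rhs R(1)[OF 1] by (simp add: w_def F_def e_def)
    next
      case 2
      then show ?thesis using lhs rhs unfolding 2 R(2) using sA by (simp add: w_def F_def c_def)
    next
      case 3
      then show ?thesis using lhs rhs unfolding 3 R(3) using sA by (simp add: w_def F_def c_def)
    next
      case 4
      then show ?thesis using lhs rhs unfolding 4 R(4) by (simp add: w_def F_def d_def)
    next
      case 5
      then show ?thesis using lhs rhs unfolding 5 R(5) using eq4 by (simp add: w_def F_def)
    next
      case 6
      then show ?thesis using lhs rhs unfolding 6 R(6) using sA eq5 by (simp add: w_def F_def algebra_simps)
    qed
  qed
  moreover have "w \<noteq> 0\<^sub>v (s+5)"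
  proof
    assume "w = 0\<^sub>v (s+5)"
    then have "w $ 0 = 0" by simp
    moreover have "w $ 0 = F 0" by (simp add: w_def)
    moreover have "F 0 \<noteq> 0" using a0 r1 unfolding F_def b_def by (auto simp: power2_eq_square)
    ultimately show False by simp
  qed
  ultimately show ?thesis unfolding eigenvalue_def eigenvector_def using w by auto
qed

lemma L_zero:
  fixes k :: nat
  assumes k: "k \<ge> 2"
  defines "E \<equiv> C5_edges \<union> {(0, i) | i. 5 \<le> i \<and> i < 5 + k} \<union> {(2, i) | i. 5 \<le> i \<and> i < 5 + k} \<union> {(0, 5 + k)}"
  shows "eigenvalue (adj_matrix (k+6) E) 0"
proof -
  define F :: "nat \<Rightarrow> real" where "F = (\<lambda>j. if j = 5 then 1 else if j = 6 then -1 else 0)"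
  define w where "w = vec (k+6) F"
  have w: "w \<in> carrier_vec (k+6)" by (simp add: w_def)
  note R = L_rows[where k=k, folded E_def]
  have iv: "{5..<k+5} = insert 5 (insert 6 {7..<k+5})" using k by auto
  have sT: "(\<Sum>j\<in>{5..<k+5}. w$j) = 0"
  proof -
    have "(\<Sum>j\<in>{7..<k+5}. w$j) = 0" by (rule sum.neutral) (auto simp: w_def F_def)
    then show ?thesis unfolding iv using k by (simp add: w_def F_def)
  qed
  have "adj_matrix (k+6) E *\<^sub>v w = 0 \<cdot>\<^sub>v w"
  proof (rule eq_vecI)
    show "dim_vec (adj_matrix (k+6) E *\<^sub>v w) = dim_vec (0 \<cdot>\<^sub>v w)" by (simp add: w_def)
    fix i assume "i < dim_vec (0 \<cdot>\<^sub>v w)"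
    then have i: "i < k+6" by (simp add: w_def)
    have lhs: "(adj_matrix (k+6) E *\<^sub>v w) $ i = (\<Sum>j\<in>{j. j < k+6 \<and> ((i,j)\<in>E \<or> (j,i)\<in>E)}. w $ j)"
      by (rule adj_row[OF i w])
    have rhs: "(0 \<cdot>\<^sub>v w) $ i = 0" using i by (simp add: w_def)
    consider "i = 0" | "i = 1" | "i = 2" | "i = 3" | "i = 4" | "i = k+5" | "5 \<le> i \<and> i < k+5" using i by linarith
    then show "(adj_matrix (k+6) E *\<^sub>v w) $ i = (0 \<cdot>\<^sub>v w) $ i"
    proof cases
      case 1 then show ?thesis using lhs rhs unfolding 1 R(1) using sT k by (simp add: w_def F_def)
    next
      case 2 then show ?thesis using lhs rhs unfolding 2 R(2) using k by (simp add: w_def F_def)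
    next
      case 3 then show ?thesis using lhs rhs unfolding 3 R(3) using sT k by (simp add: w_def F_def)
    next
      case 4 then show ?thesis using lhs rhs unfolding 4 R(4) using k by (simp add: w_def F_def)
    next
      case 5 then show ?thesis using lhs rhs unfolding 5 R(5) using k by (simp add: w_def F_def)
    next
      case 6 then show ?thesis using lhs rhs unfolding 6 R(6) using k by (simp add: w_def F_def)
    next
      case 7 then show ?thesis using lhs rhs unfolding 7 R(7)[OF conjunct1[OF 7] conjunct2[OF 7]] using k by (simp add: w_def F_def)
    qed
  qed
  moreover have "w \<noteq> 0\<^sub>v (k+6)"
  proof
    assume "w = 0\<^sub>v (k+6)"
    then have "w $ 5 = 0" by simp
    moreover have "w $ 5 = 1" by (simp add: w_def F_def)
    ultimately show False by simp
  qed
  ultimately show ?thesis unfolding eigenvalue_def eigenvector_def using w by auto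
qed

theorem lemma2p3:
  fixes m t :: nat
  assumes "m \<ge> 10" and "even m" and "t > 0" and "m = 3 * t + 1"
  shows "lambda_max (L_graph_adj m) < lambda_max (T_graph_adj m)"
proof -
  from assms have "odd t" by auto
  then obtain j where tj: "t = 2*j+1" using oddE by blast
  with assms have mj: "m = 6*j+4" and j1: "j \<ge> 1" by auto
  define k where "k = 3*j - 1"
  define s where "s = 2*j"
  have k2: "k \<ge> 2" using j1 by (simp add: k_def)
  have mk: "(m-6) div 2 = k" using mj j1 by (simp add: k_def)
  have ms: "(m-4) div 3 = s" using mj by (simp add: s_def)
  define EL where "EL = C5_edges \<union> {(0, i) | i. 5 \<le> i \<and> i < 5 + k} \<union> {(2, i) | i. 5 \<le> i \<and> i < 5 + k} \<union> {(0, 5 + k)}"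
  define ET where "ET = {(a, b) | a b. a < s \<and> (b = s \<or> b = s + 1)}
     \<union> {(a, s + 4) | a. a < s}
     \<union> {(b, s + 2) | b. b = s \<or> b = s + 1}
     \<union> {(s + 2, s + 3), (s + 3, s + 4)}"
  have LA: "L_graph_adj m = adj_matrix (k+6) EL"
    unfolding L_graph_adj_def L_nverts_def L_edges_def Let_def mk EL_def by (simp add: add.commute)
  have TA: "T_graph_adj m = adj_matrix (s+5) ET"
    unfolding T_graph_adj_def T_nverts_def T_edges_def Let_def ms ET_def by simp
  define SL where "SL = {x. eigenvalue (adj_matrix (k+6) EL) x}"
  define ST where "ST = {x. eigenvalue (adj_matrix (s+5) ET) x}"
  have fL: "finite SL" unfolding SL_def by (rule eig_finite[OF adj_dim(1)])
  have fT: "finite ST" unfolding ST_def by (rule eig_finite[OF adj_dim(1)])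
  have "0 \<in> SL" unfolding SL_def EL_def using L_zero[OF k2] by simp
  then have neL: "SL \<noteq> {}" by auto
  define xL where "xL = Max SL"
  have xL: "xL \<in> SL" unfolding xL_def using fL neL by (rule Max_in)
  define g where "g = (\<lambda>x::real. x^5 - (3*real s+4)*x^3 + (7*real s+2)*x - 4*real s)"
  have LPg: "LP (real k) x = x * (x * g x + (real j+1)*x^2 + 2*real j*x - 3*real j)" for x
  proof -
    have hk: "real k = 3*real j - 1" using j1 by (simp add: k_def of_nat_diff)
    have hs: "real s = 2 * real j" by (simp add: s_def)
    show ?thesis unfolding LP_def g_def hk hs by (simp add: algebra_simps power_numeral_reduce)
  qed
  define x0 where "x0 = max xL 1"
  have gx0: "g x0 < 0"
  proof (cases "xL \<ge> 1")
    case True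
    then have x0: "x0 = xL" by (simp add: x0_def)
    have "LP (real k) xL = 0" using L_eig[of k xL] xL True unfolding SL_def EL_def by simp
    then have "xL * g xL + (real j+1)*xL^2 + 2*real j*xL - 3*real j = 0" using True LPg[of xL] by simp
    moreover have "(real j+1)*xL^2 \<ge> real j + 1"
    proof -
      have "xL^2 \<ge> 1" using True by (simp add: one_le_power)
      then show ?thesis by (simp add: mult_left_mono[of 1 "xL^2" "real j + 1", simplified])
    qed
    moreover have "2*real j*xL \<ge> 2*real j" using True mult_left_mono[of 1 xL "2*real j"] by simp
    ultimately have "xL * g xL < 0" by linarith
    then show ?thesis using True x0 by (simp add: mult_less_0_iff)
  next
    case False
    then have "x0 = 1" by (simp add: x0_def)
    then show ?thesis by (simp add: g_def)
  qed
  define B where "B = x0 + 6*real j + 5"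
  have x01: "x0 \<ge> 1" by (simp add: x0_def)
  have gB: "g B > 0"
  proof -
    have B1: "B \<ge> 6*real j + 6" using x01 by (simp add: B_def)
    have "B^2 \<ge> B" using B1 by (simp add: power2_eq_square)
    then have "B^2 - (3*real s+4) \<ge> 1" using B1 by (simp add: s_def)
    moreover have "B^3 \<ge> 0" using B1 by simp
    ultimately have "B^3 * (B^2 - (3*real s+4)) \<ge> 0" by simp
    moreover have "(7*real s+2)*(B-1) \<ge> 0" using B1 by simp
    moreover have "g B = B^3 * (B^2 - (3*real s+4)) + (7*real s+2)*(B-1) + 3*real s + 2"
      by (simp add: g_def algebra_simps power_numeral_reduce)
    moreover have "real s \<ge> 0" by simp
    ultimately show ?thesis by linarith
  qed
  have "continuous_on {x0..B} g" unfolding g_def by (intro continuous_intros)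
  moreover have "x0 \<le> B" by (simp add: B_def)
  ultimately obtain r where r: "x0 \<le> r" "r \<le> B" "g r = 0"
    using IVT'[of g x0 0 B] gx0 gB by auto
  have "r \<noteq> x0" using r gx0 by auto
  then have rx: "r > x0" using r by simp
  have "eigenvalue (adj_matrix (s+5) ET) r"
    unfolding ET_def by (rule T_eig) (use rx x01 r(3) in \<open>auto simp: g_def add.commute\<close>)
  then have "r \<in> ST" by (simp add: ST_def)
  then have "r \<le> Max ST" using fT by simp
  moreover have "xL < r" using rx by (simp add: x0_def)
  ultimately show ?thesis
    unfolding lambda_max_def LA TA SL_def[symmetric] ST_def[symmetric] xL_def[symmetric] by simp
qed

end
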